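(* Let $A=(n_A)_{n\ge0}$ be a cobweb tiling sequence with $0_A=1$, and let $s\ge0$ be an integer. Define the shifted sequence $B=\oplus_sA=(n_B)_{n\ge0}$ by $n_B=1$ for $n<s$ and $n_B=(n-s)_A$ for $n\ge s$. Then $B$ is also a cobweb tiling sequence.
   Context: Notation: $n_F\equiv F_n$. A sequence $F=(n_F)_{n\ge0}$ of natural numbers with $0_F=1$ is cobweb-admissible iff every $F$-nomial coefficient $\binom{n}{k}_F=\frac{n_F(n-1)_F\cdots(n-k+1)_F}{1_F2_F\cdots k_F}$, $0\le k\le n$, is a nonnegative integer. The cobweb poset of $F$ has, for each $s\ge1$, a level $\Phi_s$ consisting of $s_F$ distinct vertices (levels pairwise disjoint), plus a root level $\Phi_0$ with one vertex; for $x\in\Phi_i$, $y\in\Phi_j$ one has $x<y$ iff $i<j$. For $1\le a\le b$, the layer $\langle\Phi_a\to\Phi_b\rangle$ is the subposet on $\Phi_a\cup\dots\cup\Phi_b$; it has $m=b-a+1$ levels and its maximal chains form the set $\Phi_a\times\dots\times\Phi_b$. For a permutation $\sigma$ of $\{1,\dots,m\}$, a block of type $\sigma P_m$ in this layer is the subposet induced on $V_a\cup\dots\cup V_b$ where $V_{a-1+i}\subseteq\Phi_{a-1+i}$ and $|V_{a-1+i}|=\sigma(i)_F$ for $i=1,\dots,m$; its maximal chains form the set $V_a\times\dots\times V_b$. A tiling of the layer is a finite family of such blocks ($\sigma$ may vary from block to block) whose sets $V_a\times\dots\times V_b$ partition $\Phi_a\times\dots\times\Phi_b$ (pairwise max-disjoint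 and covering all maximal chains). A cobweb tiling sequence is a cobweb-admissible sequence $F$ such that for all $1\le a\le b$ the layer $\langle\Phi_a\to\Phi_b\rangle$ admits a tiling by blocks of type $\sigma P_{b-a+1}$. *)

theory Defs
  imports Main "HOL-Library.FuncSet"
begin

text \<open>Vertex j of level l of the cobweb poset is encoded as the index j < F l of level l
  (levels are disjoint by construction). A maximal chain of the layer from level a to
  level b is a choice function on {a..b} picking one vertex in each level.\<close>

definition cobweb_admissible :: "(nat \<Rightarrow> nat) \<Rightarrow> bool" where
  "cobweb_admissible F \<longleftrightarrow> F 0 = 1 \<and>
     (\<forall>n k. k \<le> n \<longrightarrow>
        (\<Prod>i\<in>{1..k}. F i) \<noteq> 0 \<and> (\<Prod>i\<in>{1..k}. F i) dvd (\<Prod>i<k. F (n - i)))"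

definition max_chains :: "(nat \<Rightarrow> nat) \<Rightarrow> nat \<Rightarrow> nat \<Rightarrow> (nat \<Rightarrow> nat) set" where
  "max_chains F a b = Pi\<^sub>E {a..b} (\<lambda>l. {..<F l})"

definition is_block :: "(nat \<Rightarrow> nat) \<Rightarrow> nat \<Rightarrow> nat \<Rightarrow> (nat \<Rightarrow> nat set) \<Rightarrow> bool" where
  "is_block F a b V \<longleftrightarrow> (\<forall>l\<in>{a..b}. V l \<subseteq> {..<F l}) \<and>
     (\<exists>\<sigma>. bij_betw \<sigma> {1..b - a + 1} {1..b - a + 1} \<and>
          (\<forall>i\<in>{1..b - a + 1}. card (V (a - 1 + i)) = F (\<sigma> i)))"

definition block_chains :: "nat \<Rightarrow> nat \<Rightarrow> (nat \<Rightarrow> nat set) \<Rightarrow> (nat \<Rightarrow> nat) set" where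
  "block_chains a b V = Pi\<^sub>E {a..b} V"

definition is_tiling :: "(nat \<Rightarrow> nat) \<Rightarrow> nat \<Rightarrow> nat \<Rightarrow> (nat \<Rightarrow> nat set) set \<Rightarrow> bool" where
  "is_tiling F a b T \<longleftrightarrow> finite T \<and> (\<forall>V\<in>T. is_block F a b V) \<and>
     (\<forall>V\<in>T. \<forall>W\<in>T. V \<noteq> W \<longrightarrow> block_chains a b V \<inter> block_chains a b W = {}) \<and>
     (\<Union>V\<in>T. block_chains a b V) = max_chains F a b"

definition cobweb_tiling :: "(nat \<Rightarrow> nat) \<Rightarrow> bool" where
  "cobweb_tiling F \<longleftrightarrow> cobweb_admissible F \<and>
     (\<forall>a b. 1 \<le> a \<and> a \<le> b \<longrightarrow> (\<exists>T. is_tiling F a b T))"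

definition shift_seq :: "nat \<Rightarrow> (nat \<Rightarrow> nat) \<Rightarrow> nat \<Rightarrow> nat" where
  "shift_seq s A n = (if n < s then 1 else A (n - s))"

end

theory Submission
  imports Defs
begin

lemma shift_small: "A 0 = 1 \<Longrightarrow> i \<le> s \<Longrightarrow> shift_seq s A i = 1"
  by (auto simp: shift_seq_def)

lemma shift_big: "s \<le> i \<Longrightarrow> shift_seq s A i = A (i - s)"
  by (auto simp: shift_seq_def)

lemma prod_shift:
  assumes "A 0 = 1"
  shows "(\<Prod>i\<in>{1..k}. shift_seq s A i) = (\<Prod>i\<in>{1..k-s}. A i)"
proof (induction k)
  case 0 then show ?case by simp
next
  case (Suc k)
  show ?case
  proof (cases "Suc k \<le> s")
    case True
    then have "Suc k - s = 0" "k - s = 0" by auto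
    then show ?thesis using Suc True shift_small[where A=A, OF assms True] by simp
  next
    case False
    then have e: "Suc k - s = Suc (k - s)" by auto
    have "shift_seq s A (Suc k) = A (Suc (k-s))" using False by (simp add: shift_seq_def e)
    then show ?thesis using Suc e by simp
  qed
qed

lemma admissible_shift:
  assumes adm: "cobweb_admissible A" and A0: "A 0 = 1"
  shows "cobweb_admissible (shift_seq s A)"
  unfolding cobweb_admissible_def
proof (intro conjI allI impI)
  show "shift_seq s A 0 = 1" using A0 by (simp add: shift_seq_def)
next
  fix n k :: nat assume kn: "k \<le> n"
  have P: "(\<Prod>i\<in>{1..k}. shift_seq s A i) = (\<Prod>i\<in>{1..k-s}. A i)" by (rule prod_shift[where A=A, OF A0])
  have a1: "(\<Prod>i\<in>{1..k-s}. A i) \<noteq> 0 \<and> (\<Prod>i\<in>{1..k-s}. A i) dvd (\<Prod>i<k-s. A (n - s - i))"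
  proof -
    have "k - s \<le> n - s" using kn by simp
    then show ?thesis using adm unfolding cobweb_admissible_def by blast
  qed
  show "(\<Prod>i\<in>{1..k}. shift_seq s A i) \<noteq> 0" using P a1 by simp
  have "(\<Prod>i<k-s. A (n - s - i)) = (\<Prod>i<k-s. shift_seq s A (n - i))"
  proof (rule prod.cong)
    fix i assume "i \<in> {..<k-s}"
    then have "s \<le> n - i" "n - i - s = n - s - i" using kn by auto
    then show "A (n - s - i) = shift_seq s A (n - i)" by (simp add: shift_big)
  qed simp
  also have "\<dots> dvd (\<Prod>i<k. shift_seq s A (n - i))"
    by (rule prod_dvd_prod_subset) auto
  finally show "(\<Prod>i\<in>{1..k}. shift_seq s A i) dvd (\<Prod>i<k. shift_seq s A (n - i))"
    using P a1 dvd_trans by metis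
qed


lemma bc_sub_max:
  assumes "\<forall>l\<in>{a..b}. V l \<subseteq> {..<F l}"
  shows "block_chains a b V \<subseteq> max_chains F a b"
  using assms unfolding block_chains_def max_chains_def by (auto intro: PiE_mono)

lemma tiling_small:
  assumes A0: "A 0 = 1" and ab: "a \<le> b" and bs: "b < a + s"
  shows "\<exists>T. is_tiling (shift_seq s A) a b T"
proof -
  let ?B = "shift_seq s A"
  define T where "T = (\<lambda>f. \<lambda>l. {f l}) ` max_chains ?B a b"
  have bcf: "block_chains a b (\<lambda>l. {f l}) = {f}" if "f \<in> max_chains ?B a b" for f
  proof -
    have "f \<in> extensional {a..b}" using that unfolding max_chains_def by (simp add: PiE_iff)
    then show ?thesis unfolding block_chains_def
      by (auto simp: PiE_iff extensional_def intro: extensionalityI[of _ "{a..b}"])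
  qed
  have "is_tiling ?B a b T"
    unfolding is_tiling_def
  proof (intro conjI ballI impI)
    show "finite T" unfolding T_def max_chains_def by (intro finite_imageI finite_PiE) auto
  next
    fix V assume "V \<in> T"
    then obtain f where f: "f \<in> max_chains ?B a b" and V: "V = (\<lambda>l. {f l})" unfolding T_def by auto
    show "is_block ?B a b V" unfolding is_block_def
    proof (intro conjI exI[of _ id])
      show "\<forall>l\<in>{a..b}. V l \<subseteq> {..<?B l}" using f V unfolding max_chains_def by (auto simp: PiE_iff)
      show "bij_betw id {1..b - a + 1} {1..b - a + 1}" by simp
      show "\<forall>i\<in>{1..b - a + 1}. card (V (a - 1 + i)) = ?B (id i)"
        using V bs ab A0 by (auto simp: shift_seq_def)
    qed
  next
    fix V W assume "V \<in> T" "W \<in> T" "V \<noteq> W"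
    then obtain f g where f: "f \<in> max_chains ?B a b" "V = (\<lambda>l. {f l})"
      and g: "g \<in> max_chains ?B a b" "W = (\<lambda>l. {g l})" unfolding T_def by auto
    then show "block_chains a b V \<inter> block_chains a b W = {}" using bcf \<open>V \<noteq> W\<close> by auto
  next
    show "(\<Union>V\<in>T. block_chains a b V) = max_chains ?B a b"
      unfolding T_def using bcf by auto
  qed
  then show ?thesis by blast
qed


lemma tiling_big:
  assumes A0: "A 0 = 1" and a1: "1 \<le> a" and bs: "a + s \<le> b"
    and TA: "is_tiling A a (b - s) TA"
  shows "\<exists>T. is_tiling (shift_seq s A) a b T"
proof -
  let ?B = "shift_seq s A"
  define X where "X = Pi\<^sub>E {a..<a+s} (\<lambda>l. {..<?B l})"
  define VV where "VV = (\<lambda>(x::nat\<Rightarrow>nat) (W::nat\<Rightarrow>nat set) l. if l < a + s then {x l} else W (l - s))"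
  define sh where "sh = (\<lambda>f::nat\<Rightarrow>nat. restrict (\<lambda>l. f (l + s)) {a..b-s})"
  define T where "T = (\<lambda>(x,W). VV x W) ` (X \<times> TA)"
  have finTA: "finite TA" and blA: "\<And>W. W \<in> TA \<Longrightarrow> is_block A a (b-s) W"
    and disA: "\<And>W W'. W \<in> TA \<Longrightarrow> W' \<in> TA \<Longrightarrow> W \<noteq> W' \<Longrightarrow>
        block_chains a (b-s) W \<inter> block_chains a (b-s) W' = {}"
    and covA: "(\<Union>W\<in>TA. block_chains a (b-s) W) = max_chains A a (b-s)"
    using TA unfolding is_tiling_def by auto
  have mem: "f \<in> block_chains a b (VV x W) \<longleftrightarrow> f \<in> extensional {a..b} \<and>
      (\<forall>l\<in>{a..<a+s}. f l = x l) \<and> sh f \<in> block_chains a (b-s) W" for f x W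
  proof
    assume f: "f \<in> block_chains a b (VV x W)"
    have "f \<in> extensional {a..b}" using f unfolding block_chains_def by (simp add: PiE_iff)
    moreover have "\<forall>l\<in>{a..<a+s}. f l = x l"
    proof
      fix l assume l: "l \<in> {a..<a+s}"
      then have "l \<in> {a..b}" using bs by auto
      then have "f l \<in> VV x W l" using f unfolding block_chains_def by (auto simp: PiE_iff)
      then show "f l = x l" using l unfolding VV_def by auto
    qed
    moreover have "sh f \<in> block_chains a (b-s) W"
      unfolding block_chains_def sh_def
    proof (rule restrict_PiE_iff[THEN iffD2], intro ballI)
      fix l assume l: "l \<in> {a..b-s}"
      then have "l + s \<in> {a..b}" "\<not> l + s < a + s" using bs by auto
      then have "f (l + s) \<in> VV x W (l + s)" using f unfolding block_chains_def by (auto simp: PiE_iff)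
      then show "f (l + s) \<in> W l" using \<open>\<not> l + s < a + s\<close> unfolding VV_def by auto
    qed
    ultimately show "f \<in> extensional {a..b} \<and> (\<forall>l\<in>{a..<a+s}. f l = x l) \<and> sh f \<in> block_chains a (b-s) W"
      by blast
  next
    assume H: "f \<in> extensional {a..b} \<and> (\<forall>l\<in>{a..<a+s}. f l = x l) \<and> sh f \<in> block_chains a (b-s) W"
    show "f \<in> block_chains a b (VV x W)" unfolding block_chains_def PiE_iff
    proof (intro conjI ballI)
      show "f \<in> extensional {a..b}" using H by blast
      fix l assume l: "l \<in> {a..b}"
      show "f l \<in> VV x W l"
      proof (cases "l < a + s")
        case True then show ?thesis using H l unfolding VV_def by auto
      next
        case False
        then have l': "l - s \<in> {a..b-s}" "l - s + s = l" using l by auto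
        have "sh f (l - s) \<in> W (l - s)" using H l'(1) unfolding block_chains_def by (auto simp: PiE_iff)
        then show ?thesis using False l' unfolding VV_def sh_def by auto
      qed
    qed
  qed
  have "is_tiling ?B a b T"
    unfolding is_tiling_def
  proof (intro conjI ballI impI)
    show "finite T" unfolding T_def X_def using finTA by (intro finite_imageI finite_cartesian_product finite_PiE) auto
  next
    fix V assume "V \<in> T"
    then obtain x W where x: "x \<in> X" and W: "W \<in> TA" and V: "V = VV x W" unfolding T_def by auto
    from blA[OF W] obtain \<sigma> where Wsub: "\<forall>l\<in>{a..b-s}. W l \<subseteq> {..<A l}"
      and sig: "bij_betw \<sigma> {1..b - s - a + 1} {1..b - s - a + 1}"
      and sigc: "\<forall>i\<in>{1..b - s - a + 1}. card (W (a - 1 + i)) = A (\<sigma> i)"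
      unfolding is_block_def by blast
    define \<tau> where "\<tau> = (\<lambda>i. if i \<le> s then i else s + \<sigma> (i - s))"
    have sigin: "\<sigma> j \<in> {1..b - s - a + 1}" if "j \<in> {1..b - s - a + 1}" for j
      using sig that unfolding bij_betw_def by auto
    have siginj: "inj_on \<sigma> {1..b - s - a + 1}" using sig unfolding bij_betw_def by auto
    show "is_block ?B a b V" unfolding is_block_def
    proof (intro conjI exI[of _ \<tau>])
      show "\<forall>l\<in>{a..b}. V l \<subseteq> {..<?B l}"
      proof
        fix l assume l: "l \<in> {a..b}"
        show "V l \<subseteq> {..<?B l}"
        proof (cases "l < a + s")
          case True then show ?thesis using x l unfolding V VV_def X_def by (auto simp: PiE_iff)
        next
          case False
          then have "l - s \<in> {a..b-s}" "s \<le> l" using l by auto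
          then show ?thesis using False Wsub unfolding V VV_def by (auto simp: shift_big)
        qed
      qed
      have img: "\<tau> ` {1..b - a + 1} \<subseteq> {1..b - a + 1}"
      proof
        fix y assume "y \<in> \<tau> ` {1..b - a + 1}"
        then obtain i where i: "i \<in> {1..b - a + 1}" and y: "y = \<tau> i" by auto
        show "y \<in> {1..b - a + 1}"
        proof (cases "i \<le> s")
          case True then show ?thesis using i y unfolding \<tau>_def by auto
        next
          case False
          then have "i - s \<in> {1..b - s - a + 1}" using i bs by auto
          from sigin[OF this] show ?thesis using False y bs unfolding \<tau>_def by auto
        qed
      qed
      have inj: "inj_on \<tau> {1..b - a + 1}"
      proof (rule inj_onI)
        fix i j assume i: "i \<in> {1..b - a + 1}" and j: "j \<in> {1..b - a + 1}" and e: "\<tau> i = \<tau> j"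
        show "i = j"
        proof (cases "i \<le> s"; cases "j \<le> s")
          assume "i \<le> s" "j \<le> s" then show ?thesis using e unfolding \<tau>_def by auto
        next
          assume "i \<le> s" "\<not> j \<le> s"
          then have "j - s \<in> {1..b - s - a + 1}" using j bs by auto
          from sigin[OF this] show ?thesis using e \<open>i \<le> s\<close> \<open>\<not> j \<le> s\<close> unfolding \<tau>_def by auto
        next
          assume "\<not> i \<le> s" "j \<le> s"
          then have "i - s \<in> {1..b - s - a + 1}" using i bs by auto
          from sigin[OF this] show ?thesis using e \<open>\<not> i \<le> s\<close> \<open>j \<le> s\<close> unfolding \<tau>_def by auto
        next
          assume ni: "\<not> i \<le> s" and nj: "\<not> j \<le> s"
          then have "i - s \<in> {1..b - s - a + 1}" "j - s \<in> {1..b - s - a + 1}" using i j bs by auto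
          moreover have "\<sigma> (i - s) = \<sigma> (j - s)" using e ni nj unfolding \<tau>_def by auto
          ultimately have "i - s = j - s" using siginj by (auto dest: inj_onD)
          then show ?thesis using ni nj by auto
        qed
      qed
      show "bij_betw \<tau> {1..b - a + 1} {1..b - a + 1}"
        unfolding bij_betw_def using inj img endo_inj_surj[of "{1..b - a + 1}" \<tau>] by auto
      show "\<forall>i\<in>{1..b - a + 1}. card (V (a - 1 + i)) = ?B (\<tau> i)"
      proof
        fix i assume i: "i \<in> {1..b - a + 1}"
        show "card (V (a - 1 + i)) = ?B (\<tau> i)"
        proof (cases "i \<le> s")
          case True
          then have "a - 1 + i < a + s" using a1 i by auto
          then show ?thesis using True A0 unfolding V VV_def \<tau>_def by (simp add: shift_small)
        next
          case False
          then have i': "i - s \<in> {1..b - s - a + 1}" "\<not> a - 1 + i < a + s"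
            "a - 1 + i - s = a - 1 + (i - s)" using i bs a1 by auto
          have c: "card (W (a - 1 + (i - s))) = A (\<sigma> (i - s))" using sigc i'(1) by blast
          have "V (a - 1 + i) = W (a - 1 + (i - s))" using i'(2,3) unfolding V VV_def by simp
          moreover have "?B (\<tau> i) = A (\<sigma> (i - s))" using False unfolding \<tau>_def by (simp add: shift_big)
          ultimately show ?thesis using c by simp
        qed
      qed
    qed
  next
    fix V V' assume "V \<in> T" "V' \<in> T" and ne: "V \<noteq> V'"
    then obtain x W x' W' where x: "x \<in> X" and W: "W \<in> TA" and V: "V = VV x W"
      and x': "x' \<in> X" and W': "W' \<in> TA" and V': "V' = VV x' W'" unfolding T_def by auto
    show "block_chains a b V \<inter> block_chains a b V' = {}"
    proof (rule ccontr)
      assume "block_chains a b V \<inter> block_chains a b V' \<noteq> {}"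
      then obtain f where f1: "f \<in> block_chains a b (VV x W)" and f2: "f \<in> block_chains a b (VV x' W')"
        using V V' by auto
      have "x = x'"
      proof (rule extensionalityI[of _ "{a..<a+s}"])
        show "x \<in> extensional {a..<a+s}" "x' \<in> extensional {a..<a+s}" using x x' unfolding X_def
          by (auto simp: PiE_iff)
        fix l assume "l \<in> {a..<a+s}" then show "x l = x' l" using f1 f2 mem by metis
      qed
      moreover have "W = W'"
      proof (rule ccontr)
        assume "W \<noteq> W'"
        then show False using disA[OF W W'] f1 f2 mem by blast
      qed
      ultimately show False using ne V V' by simp
    qed
  next
    show "(\<Union>V\<in>T. block_chains a b V) = max_chains ?B a b"
    proof
      show "(\<Union>V\<in>T. block_chains a b V) \<subseteq> max_chains ?B a b"
      proof
        fix f assume "f \<in> (\<Union>V\<in>T. block_chains a b V)"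
        then obtain x W where x: "x \<in> X" and W: "W \<in> TA" and f: "f \<in> block_chains a b (VV x W)"
          unfolding T_def by auto
        have Wsub: "\<forall>l\<in>{a..b-s}. W l \<subseteq> {..<A l}" using blA[OF W] unfolding is_block_def by blast
        have "\<forall>l\<in>{a..b}. VV x W l \<subseteq> {..<?B l}"
        proof
          fix l assume l: "l \<in> {a..b}"
          show "VV x W l \<subseteq> {..<?B l}"
          proof (cases "l < a + s")
            case True then show ?thesis using x l unfolding VV_def X_def by (auto simp: PiE_iff)
          next
            case False
            then have "l - s \<in> {a..b-s}" "s \<le> l" using l by auto
            then show ?thesis using False Wsub unfolding VV_def by (auto simp: shift_big)
          qed
        qed
        then show "f \<in> max_chains ?B a b" using bc_sub_max f by blast
      qed
    next
      show "max_chains ?B a b \<subseteq> (\<Union>V\<in>T. block_chains a b V)"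
      proof
        fix f assume f: "f \<in> max_chains ?B a b"
        define x where "x = restrict f {a..<a+s}"
        have xX: "x \<in> X" using f bs unfolding x_def X_def max_chains_def by (auto simp: PiE_iff)
        have "sh f \<in> max_chains A a (b-s)"
          unfolding max_chains_def sh_def
        proof (rule restrict_PiE_iff[THEN iffD2], intro ballI)
          fix l assume l: "l \<in> {a..b-s}"
          then have "l + s \<in> {a..b}" "s \<le> l + s" using bs by auto
          then have "f (l + s) < ?B (l + s)" using f unfolding max_chains_def by (auto simp: PiE_iff)
          moreover have "?B (l + s) = A l" by (simp add: shift_big)
          ultimately show "f (l + s) \<in> {..<A l}" by simp
        qed
        then obtain W where W: "W \<in> TA" and shW: "sh f \<in> block_chains a (b-s) W" using covA by blast
        have "f \<in> block_chains a b (VV x W)"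
          using mem[of f x W] f shW unfolding max_chains_def x_def by (auto simp: PiE_iff)
        moreover have "VV x W \<in> T" unfolding T_def using xX W by auto
        ultimately show "f \<in> (\<Union>V\<in>T. block_chains a b V)" by blast
      qed
    qed
  qed
  then show ?thesis by blast
qed

theorem mainTheorem5:
  fixes A :: "nat \<Rightarrow> nat" and s :: nat
  assumes "cobweb_tiling A" and "A 0 = 1"
  shows "cobweb_tiling (shift_seq s A)"
proof -
  have adm: "cobweb_admissible A" using assms(1) unfolding cobweb_tiling_def by blast
  have til: "\<And>a b. 1 \<le> a \<Longrightarrow> a \<le> b \<Longrightarrow> \<exists>T. is_tiling A a b T"
    using assms(1) unfolding cobweb_tiling_def by blast
  show ?thesis unfolding cobweb_tiling_def
  proof (intro conjI allI impI)
    show "cobweb_admissible (shift_seq s A)" using admissible_shift[OF adm assms(2)] .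
  next
    fix a b :: nat assume ab: "1 \<le> a \<and> a \<le> b"
    show "\<exists>T. is_tiling (shift_seq s A) a b T"
    proof (cases "b < a + s")
      case True then show ?thesis using tiling_small[where A=A, OF assms(2)] ab by blast
    next
      case False
      then have "a \<le> b - s" by arith
      then obtain TA where "is_tiling A a (b - s) TA" using til[of a "b - s"] ab by auto
      then show ?thesis using tiling_big[where A=A, OF assms(2)] ab False by auto
    qed
  qed
qed

end
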